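(* Let $\Omega\subset\mathbb C^n$ be a bounded open convex set with $C^1$ boundary and $C^1$ defining function $\rho$ (so $\Omega=\{\rho<0\}$ near $\partial\Omega$ and $\nabla\rho\ne0$ on $\partial\Omega$). For $\zeta\in\partial\Omega$ let $$f_\zeta(z)=\frac{1}{\sum_{j=1}^n\frac{\partial\rho}{\partial\zeta_j}(\zeta)(\zeta_j-z_j)},\quad z\in\Omega.$$ Then $f_\zeta$ is holomorphic on $\Omega$, $f_\zeta\in\bigcap_{p<2}\mathcal{O}L^p(\Omega)$, $f_\zeta\notin\mathcal{O}L^\infty(\Omega)$, and (with the principal branch of $\log$) $\log f_\zeta\in\bigcap_{p<\infty}\mathcal{O}L^p(\Omega)$ while $\log f_\zeta\notin\mathcal{O}L^\infty(\Omega)$.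
   Context: For a bounded open set $D$ and $p\ge1$, $\mathcal{O}L^p(D)$ is the set of holomorphic $f$ on $D$ with $\int_D|f|^p\,dv<\infty$; $\mathcal{O}L^\infty(D)$ is the set of bounded holomorphic functions on $D$. *)

theory Defs
  imports "HOL-Analysis.Analysis"
begin

text \<open>Points of C^n are vectors of type complex^'n. A function is holomorphic on D
  if at every point of D it is (real-)Frechet differentiable with a complex-linear
  derivative h \<mapsto> sum_j a_j h_j.\<close>
definition holo_n :: "(complex^'n) set \<Rightarrow> (complex^'n \<Rightarrow> complex) \<Rightarrow> bool" where
  "holo_n D f \<longleftrightarrow> (\<forall>z\<in>D. \<exists>a::complex^'n.
      (f has_derivative (\<lambda>h. \<Sum>j\<in>UNIV. a$j * h$j)) (at z))"

definition OL :: "real \<Rightarrow> (complex^'n) set \<Rightarrow> (complex^'n \<Rightarrow> complex) set" where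
  "OL p D = {f. holo_n D f \<and> set_integrable lborel D (\<lambda>z. norm (f z) powr p)}"

definition OL_inf :: "(complex^'n) set \<Rightarrow> (complex^'n \<Rightarrow> complex) set" where
  "OL_inf D = {f. holo_n D f \<and> bounded (f ` D)}"

text \<open>Wirtinger derivative d rho / d zeta_j at a point, computed from the real
  Frechet derivative D of rho: (D(e_j) - i D(i e_j)) / 2.\<close>
definition wirtinger :: "(complex^'n \<Rightarrow> real) \<Rightarrow> 'n \<Rightarrow> complex" where
  "wirtinger D j = (complex_of_real (D (axis j 1)) - \<i> * complex_of_real (D (axis j \<i>))) / 2"

definition f_zeta :: "((complex^'n) \<Rightarrow>\<^sub>L real) \<Rightarrow> complex^'n \<Rightarrow> complex^'n \<Rightarrow> complex" where
  "f_zeta D \<zeta> z = 1 / (\<Sum>j\<in>UNIV. wirtinger (blinfun_apply D) j * (\<zeta>$j - z$j))"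

end

theory Submission imports Defs begin

definition phi :: "real \<Rightarrow> real \<Rightarrow> ennreal" where
  "phi r s = (if s = 0 then \<infinity> else ennreal (\<bar>s\<bar> powr (-r)))"

lemma phi_measurable[measurable]: "phi r \<in> borel_measurable borel"
  unfolding phi_def by measurable

lemma phi_unit:
  assumes r: "0 \<le> r" "r < 1"
  shows "(\<integral>\<^sup>+ v. indicator {-1..1} v * phi r v \<partial>lborel) < \<infinity>"
proof -
  define g where "g = (\<lambda>v::real. ennreal (indicator {0..1} v * v powr (-r)))"
  have [measurable]: "g \<in> borel_measurable borel" unfolding g_def by measurable
  have I: "integral\<^sup>N lborel (\<lambda>x. indicator {0..1} x * x powr (-r)) = 1 / (1 - r)"
    using nn_integral_has_integral_lebesgue[OF _ has_integral_powr_from_0[of "-r" 1]] r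
    by simp
  have Ig: "(\<integral>\<^sup>+ v. g v \<partial>lborel) = ennreal (1/(1-r))"
    unfolding g_def using I by simp
  have Ig2: "(\<integral>\<^sup>+ v. g (-v) \<partial>lborel) = ennreal (1/(1-r))"
    using nn_integral_real_affine[of g "-1" 0] Ig by simp
  have "(\<integral>\<^sup>+ v. indicator {-1..1} v * phi r v \<partial>lborel) = (\<integral>\<^sup>+ v. g v + g (-v) \<partial>lborel)"
  proof (rule nn_integral_cong_AE)
    show "AE v in lborel. indicator {-1..1} v * phi r v = g v + g (-v)"
      using AE_lborel_singleton[of "0::real"]
    proof eventually_elim
      case (elim v)
      then show ?case
        by (cases "v > 0") (auto simp: g_def phi_def indicator_def)
    qed
  qed
  also have "\<dots> = (\<integral>\<^sup>+ v. g v \<partial>lborel) + (\<integral>\<^sup>+ v. g (-v) \<partial>lborel)"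
    by (rule nn_integral_add) auto
  also have "\<dots> < \<infinity>" using Ig Ig2 by (simp add: ennreal_plus[symmetric] del: ennreal_plus)
  finally show ?thesis .
qed

definition K1 :: "real \<Rightarrow> real \<Rightarrow> ennreal" where
  "K1 r R = (\<integral>\<^sup>+ v. indicator {-1..1} v * phi r v \<partial>lborel) + ennreal (2 * R)"

lemma K1_fin: "0 \<le> r \<Longrightarrow> r < 1 \<Longrightarrow> K1 r R < \<infinity>"
  unfolding K1_def using phi_unit by simp

lemma phi_shift:
  assumes r: "0 \<le> r" "r < 1" and R: "0 \<le> R"
  shows "(\<integral>\<^sup>+ y. indicator {-R..R} y * phi r (y - u) \<partial>lborel) \<le> K1 r R"
proof -
  define f where "f = (\<lambda>v. indicator {-1..1} v * phi r v)"
  have [measurable]: "f \<in> borel_measurable borel" unfolding f_def by measurable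
  have "(\<integral>\<^sup>+ y. indicator {-R..R} y * phi r (y - u) \<partial>lborel)
      \<le> (\<integral>\<^sup>+ y. f (y - u) + indicator {-R..R} y \<partial>lborel)"
  proof (rule nn_integral_mono)
    fix y
    show "indicator {-R..R} y * phi r (y - u) \<le> f (y - u) + indicator {-R..R} y"
    proof (cases "\<bar>y - u\<bar> \<le> 1")
      case True then show ?thesis
        by (auto simp: f_def indicator_def)
    next
      case False
      then have "\<bar>y - u\<bar> powr (-r) \<le> 1"
        using ge_one_powr_ge_zero[of "\<bar>y-u\<bar>" r] r by (simp add: powr_minus inverse_le_1_iff)
      then show ?thesis using False
        by (auto simp: f_def indicator_def phi_def)
    qed
  qed
  also have "\<dots> = (\<integral>\<^sup>+ y. f (y - u) \<partial>lborel) + (\<integral>\<^sup>+ y. indicator {-R..R} y \<partial>lborel)"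
    by (rule nn_integral_add) auto
  also have "(\<integral>\<^sup>+ y. f (y - u) \<partial>lborel) = (\<integral>\<^sup>+ y. f y \<partial>lborel)"
    using nn_integral_real_affine[of "\<lambda>y. f (y - u)" 1 u] by simp
  also have "(\<integral>\<^sup>+ y. indicator {-R..R} y \<partial>lborel) = ennreal (2 * R)"
    using R by simp
  finally show ?thesis unfolding K1_def f_def .
qed

lemma sq_ge_2prod: "2 * \<bar>s\<bar> * \<bar>t\<bar> \<le> s\<^sup>2 + (t::real)\<^sup>2"
proof -
  have "0 \<le> (\<bar>s\<bar> - \<bar>t\<bar>)\<^sup>2" by simp
  then show ?thesis by (simp add: power2_eq_square algebra_simps)
qed

lemma pointwise_bound:
  fixes l w :: complex
  assumes l: "l \<noteq> 0" and q: "0 \<le> q" "q < 2"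
  shows "ennreal (cmod (l * w) powr (-q))
    \<le> ennreal (cmod l powr (-q) * 2 powr (-q/2)) * phi (q/2) (Re w) * phi (q/2) (Im w)"
proof (cases "Re w = 0 \<or> Im w = 0")
  case True
  show ?thesis
  proof (cases "w = 0")
    case True then show ?thesis by simp
  next
    case False
    have pos: "0 < cmod l powr (-q) * 2 powr (-q/2)" using l by simp
    from False True have "(Re w = 0 \<and> Im w \<noteq> 0) \<or> (Re w \<noteq> 0 \<and> Im w = 0)"
      using complex_eq_iff by auto
    then have "phi (q/2) (Re w) * phi (q/2) (Im w) = \<infinity>"
      by (auto simp: phi_def ennreal_mult_top ennreal_top_mult)
    then show ?thesis using pos
      by (simp add: mult.assoc ennreal_mult_top)
  qed
next
  case False
  then have s: "Re w \<noteq> 0" and t: "Im w \<noteq> 0" by auto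
  have "cmod w powr (-q) = ((Re w)\<^sup>2 + (Im w)\<^sup>2) powr (-q/2)"
    by (simp add: cmod_def powr_half_sqrt[symmetric] powr_powr)
  also have "\<dots> \<le> (2 * \<bar>Re w\<bar> * \<bar>Im w\<bar>) powr (-q/2)"
    using s t q by (intro powr_mono2' sq_ge_2prod) auto
  also have "\<dots> = 2 powr (-q/2) * (\<bar>Re w\<bar> powr (-(q/2)) * \<bar>Im w\<bar> powr (-(q/2)))"
    by (simp add: powr_mult)
  finally have *: "cmod w powr (-q) \<le> 2 powr (-q/2) * (\<bar>Re w\<bar> powr (-(q/2)) * \<bar>Im w\<bar> powr (-(q/2)))" .
  have "cmod (l * w) powr (-q) = cmod l powr (-q) * cmod w powr (-q)"
    by (simp add: norm_mult powr_mult)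
  also have "\<dots> \<le> cmod l powr (-q) * (2 powr (-q/2) * (\<bar>Re w\<bar> powr (-(q/2)) * \<bar>Im w\<bar> powr (-(q/2))))"
    by (intro mult_left_mono *) auto
  finally have "ennreal (cmod (l * w) powr (-q)) \<le> ennreal (cmod l powr (-q) * 2 powr (-q/2) * \<bar>Re w\<bar> powr (-(q/2)) * \<bar>Im w\<bar> powr (-(q/2)))"
    by (simp add: mult.assoc)
  also have "\<dots> = ennreal (cmod l powr (-q) * 2 powr (-q/2)) * phi (q/2) (Re w) * phi (q/2) (Im w)"
    using s t by (simp add: phi_def ennreal_mult)
  finally show ?thesis .
qed

lemma core_PiM:
  fixes B :: "'i set" and lam :: "'i \<Rightarrow> complex"
  assumes B: "finite B" "b1 \<in> B" "b2 \<in> B" "b1 \<noteq> b2"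
    and lam: "lam b2 = \<i> * lam b1" "lam b1 \<noteq> 0"
    and q: "0 \<le> q" "q < 2" and R: "0 \<le> R"
  shows "(\<integral>\<^sup>+ f. (\<Prod>b\<in>B. indicator {-R..R} (f b)) *
      ennreal (cmod (c - (\<Sum>b\<in>B. complex_of_real (f b) * lam b)) powr (-q)) \<partial>PiM B (\<lambda>_. lborel)) < \<infinity>"
proof -
  interpret product_sigma_finite "\<lambda>_::'i. lborel::real measure" by standard
  define r where "r = q/2"
  have r: "0 \<le> r" "r < 1" using q by (auto simp: r_def)
  define J where "J = B - {b1, b2}"
  have J: "finite J" "b1 \<notin> insert b2 J" "b2 \<notin> J" using B by (auto simp: J_def)
  have BJ: "B = insert b1 (insert b2 J)" using B by (auto simp: J_def)
  define \<gamma> where "\<gamma> = (\<lambda>f::'i\<Rightarrow>real. (c - (\<Sum>b\<in>J. complex_of_real (f b) * lam b)) / lam b1)"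
  define K0 where "K0 = ennreal (cmod (lam b1) powr (-q) * 2 powr (-q/2))"
  define ind where "ind = (\<lambda>y::real. indicator {-R..R} y :: ennreal)"
  define A where "A = (\<lambda>f::'i\<Rightarrow>real. K0 * (\<Prod>b\<in>J. ind (f b)) * (ind (f b2) * phi r (f b2 - Im (\<gamma> f))))"
  define \<Psi> where "\<Psi> = (\<lambda>f::'i\<Rightarrow>real. A f * (ind (f b1) * phi r (f b1 - Re (\<gamma> f))))"
  have mJ[measurable]: "(\<lambda>f. \<Sum>b\<in>J. complex_of_real (f b) * lam b) \<in> borel_measurable (PiM I (\<lambda>_. lborel))"
    if "J \<subseteq> I" for I
    using that by (intro borel_measurable_sum) (auto intro!: borel_measurable_times measurable_component_singleton)
  have ind_m[measurable]: "ind \<in> borel_measurable borel" unfolding ind_def by measurable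
  have gm[measurable]: "\<gamma> \<in> borel_measurable (PiM I (\<lambda>_. lborel))" if "J \<subseteq> I" for I
    unfolding \<gamma>_def using mJ[OF that] by measurable
  have pJ[measurable]: "(\<lambda>f. \<Prod>b\<in>J. ind (f b)) \<in> borel_measurable (PiM I (\<lambda>_. lborel))" if "J \<subseteq> I" for I
  proof (intro borel_measurable_prod_ennreal)
    fix b assume "b \<in> J" then have "b \<in> I" using that by auto
    then show "(\<lambda>x. ind (x b)) \<in> borel_measurable (PiM I (\<lambda>_. lborel))" by measurable
  qed
  have Am[measurable]: "A \<in> borel_measurable (PiM I (\<lambda>_. lborel))" if "insert b2 J \<subseteq> I" for I
  proof -
    have "J \<subseteq> I" "b2 \<in> I" using that by auto
    note [measurable] = gm[OF this(1)] pJ[OF this(1)] 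
    show ?thesis unfolding A_def using \<open>b2 \<in> I\<close> by measurable
  qed
  have Psim[measurable]: "\<Psi> \<in> borel_measurable (PiM B (\<lambda>_. lborel))"
  proof -
    have "J \<subseteq> B" "b1 \<in> B" "insert b2 J \<subseteq> B" using B BJ by auto
    note [measurable] = gm[OF this(1)] Am[OF this(3)]
    show ?thesis unfolding \<Psi>_def using \<open>b1 \<in> B\<close> by measurable
  qed
  have step1: "(\<Prod>b\<in>B. indicator {-R..R} (f b)) *
      ennreal (cmod (c - (\<Sum>b\<in>B. complex_of_real (f b) * lam b)) powr (-q)) \<le> \<Psi> f" for f
  proof -
    have eq: "c - (\<Sum>b\<in>B. complex_of_real (f b) * lam b)
        = (- lam b1) * (Complex (f b1) (f b2) - \<gamma> f)"
    proof -
      have "(\<Sum>b\<in>B. complex_of_real (f b) * lam b) = complex_of_real (f b1) * lam b1 +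
         (complex_of_real (f b2) * lam b2 + (\<Sum>b\<in>J. complex_of_real (f b) * lam b))"
        using J unfolding BJ by simp
      then show ?thesis using lam unfolding \<gamma>_def
        by (simp add: Complex_eq field_simps)
    qed
    have "ennreal (cmod (c - (\<Sum>b\<in>B. complex_of_real (f b) * lam b)) powr (-q))
        \<le> K0 * phi r (f b1 - Re (\<gamma> f)) * phi r (f b2 - Im (\<gamma> f))"
      unfolding eq K0_def r_def using pointwise_bound[of "- lam b1" q "Complex (f b1) (f b2) - \<gamma> f"] lam q by simp
    then have "(ind (f b1) * (ind (f b2) * (\<Prod>b\<in>J. ind (f b)))) * ennreal (cmod (c - (\<Sum>b\<in>B. complex_of_real (f b) * lam b)) powr (-q))
       \<le> (ind (f b1) * (ind (f b2) * (\<Prod>b\<in>J. ind (f b)))) * (K0 * phi r (f b1 - Re (\<gamma> f)) * phi r (f b2 - Im (\<gamma> f)))"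
      by (rule mult_left_mono) simp
    moreover have "(\<Prod>b\<in>B. indicator {-R..R} (f b) :: ennreal) = ind (f b1) * (ind (f b2) * (\<Prod>b\<in>J. ind (f b)))"
      using J unfolding BJ ind_def by simp
    moreover have "(ind (f b1) * (ind (f b2) * (\<Prod>b\<in>J. ind (f b)))) * (K0 * phi r (f b1 - Re (\<gamma> f)) * phi r (f b2 - Im (\<gamma> f))) = \<Psi> f"
      unfolding \<Psi>_def A_def by (simp add: mult_ac)
    ultimately show ?thesis by simp
  qed
  have "(\<integral>\<^sup>+ f. (\<Prod>b\<in>B. indicator {-R..R} (f b)) *
      ennreal (cmod (c - (\<Sum>b\<in>B. complex_of_real (f b) * lam b)) powr (-q)) \<partial>PiM B (\<lambda>_. lborel))
      \<le> (\<integral>\<^sup>+ f. \<Psi> f \<partial>PiM B (\<lambda>_. lborel))"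
    by (intro nn_integral_mono step1)
  also have "\<dots> = (\<integral>\<^sup>+ x. (\<integral>\<^sup>+ y. \<Psi> (x(b1 := y)) \<partial>lborel) \<partial>PiM (insert b2 J) (\<lambda>_. lborel))"
    using Psim unfolding BJ by (intro product_nn_integral_insert) (use J in auto)
  also have "\<dots> \<le> (\<integral>\<^sup>+ x. A x * K1 r R \<partial>PiM (insert b2 J) (\<lambda>_. lborel))"
  proof (intro nn_integral_mono)
    fix x :: "'i \<Rightarrow> real"
    have g1: "\<gamma> (x(b1 := y)) = \<gamma> x" for y
      unfolding \<gamma>_def using J by (intro arg_cong2[where f="(/)"] arg_cong2[where f="(-)"] sum.cong) auto
    have a1: "A (x(b1 := y)) = A x" for y
    proof -
      have "(\<Prod>b\<in>J. ind ((x(b1:=y)) b)) = (\<Prod>b\<in>J. ind (x b))" using J by (intro prod.cong) auto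
      then show ?thesis using B(4) unfolding A_def g1 by simp
    qed
    have "(\<integral>\<^sup>+ y. \<Psi> (x(b1 := y)) \<partial>lborel) = (\<integral>\<^sup>+ y. A x * (ind y * phi r (y - Re (\<gamma> x))) \<partial>lborel)"
      unfolding \<Psi>_def a1 g1 by simp
    also have "\<dots> = A x * (\<integral>\<^sup>+ y. ind y * phi r (y - Re (\<gamma> x)) \<partial>lborel)"
      by (rule nn_integral_cmult) auto
    also have "\<dots> \<le> A x * K1 r R"
      unfolding ind_def by (intro mult_left_mono phi_shift r R) auto
    finally show "(\<integral>\<^sup>+ y. \<Psi> (x(b1 := y)) \<partial>lborel) \<le> A x * K1 r R" .
  qed
  also have "\<dots> = (\<integral>\<^sup>+ x. (\<integral>\<^sup>+ y. A (x(b2 := y)) * K1 r R \<partial>lborel) \<partial>PiM J (\<lambda>_. lborel))"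
    by (intro product_nn_integral_insert) (use J Am[of "insert b2 J"] in auto)
  also have "\<dots> \<le> (\<integral>\<^sup>+ x. K0 * (\<Prod>b\<in>J. ind (x b)) * K1 r R * K1 r R \<partial>PiM J (\<lambda>_. lborel))"
  proof (intro nn_integral_mono)
    fix x :: "'i \<Rightarrow> real"
    have g1: "\<gamma> (x(b2 := y)) = \<gamma> x" for y
      unfolding \<gamma>_def using J by (intro arg_cong2[where f="(/)"] arg_cong2[where f="(-)"] sum.cong) auto
    have "(\<integral>\<^sup>+ y. A (x(b2 := y)) * K1 r R \<partial>lborel)
       = (\<integral>\<^sup>+ y. (K0 * (\<Prod>b\<in>J. ind (x b)) * K1 r R) * (ind y * phi r (y - Im (\<gamma> x))) \<partial>lborel)"
    proof (intro nn_integral_cong)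
      fix y
      have "(\<Prod>b\<in>J. ind ((x(b2:=y)) b)) = (\<Prod>b\<in>J. ind (x b))" using J by (intro prod.cong) auto
      then show "A (x(b2 := y)) * K1 r R = K0 * (\<Prod>b\<in>J. ind (x b)) * K1 r R * (ind y * phi r (y - Im (\<gamma> x)))"
        unfolding A_def g1 by (simp add: mult_ac)
    qed
    also have "\<dots> = (K0 * (\<Prod>b\<in>J. ind (x b)) * K1 r R) * (\<integral>\<^sup>+ y. ind y * phi r (y - Im (\<gamma> x)) \<partial>lborel)"
      by (rule nn_integral_cmult) auto
    also have "\<dots> \<le> (K0 * (\<Prod>b\<in>J. ind (x b)) * K1 r R) * K1 r R"
      unfolding ind_def by (intro mult_left_mono phi_shift r R) auto
    finally show "(\<integral>\<^sup>+ y. A (x(b2 := y)) * K1 r R \<partial>lborel) \<le> K0 * (\<Prod>b\<in>J. ind (x b)) * K1 r R * K1 r R" .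
  qed
  also have "\<dots> = K0 * K1 r R * K1 r R * (\<integral>\<^sup>+ x. (\<Prod>b\<in>J. ind (x b)) \<partial>PiM J (\<lambda>_. lborel))"
    by (subst nn_integral_cmult[symmetric]) (auto simp: mult_ac)
  also have "(\<integral>\<^sup>+ x. (\<Prod>b\<in>J. ind (x b)) \<partial>PiM J (\<lambda>_. lborel)) = (\<Prod>b\<in>J. \<integral>\<^sup>+ y. ind y \<partial>lborel)"
    using J by (intro product_nn_integral_prod) auto
  also have "\<dots> = (\<Prod>b\<in>J. ennreal (2 * R))"
    using R unfolding ind_def by simp
  also have "K0 * K1 r R * K1 r R * \<dots> < \<infinity>"
  proof -
    have "ennreal (2 * R) ^ card J < \<infinity>"
      using R by (simp add: ennreal_power)
    then show ?thesis using K1_fin[OF r, of R] unfolding K0_def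
      by (simp add: ennreal_mult_less_top)
  qed
  finally show ?thesis .
qed

definition Lf :: "complex^'n \<Rightarrow> complex^'n \<Rightarrow> complex" where
  "Lf a z = (\<Sum>j\<in>UNIV. a$j * z$j)"

lemma Lf_sum: "Lf a (\<Sum>b\<in>B. g b) = (\<Sum>b\<in>B. Lf a (g b))"
  unfolding Lf_def by (simp add: sum_distrib_left sum_component) (rule sum.swap)

lemma Lf_scaleR: "Lf a (x *\<^sub>R v) = complex_of_real x * Lf a v"
  unfolding Lf_def vector_scaleR_component by (simp add: sum_distrib_left scaleR_conv_of_real mult_ac)

lemma Lf_axis: "Lf a (axis k u) = a$k * u"
  unfolding Lf_def by (simp add: axis_def if_distrib cong: if_cong)

lemma emb_inner: "(b::'a::euclidean_space) \<in> Basis \<Longrightarrow> (\<Sum>b'\<in>Basis. f b' *\<^sub>R b') \<bullet> b = f b"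
  by (simp add: inner_sum_left inner_Basis if_distrib cong: if_cong)

lemma core_lborel:
  fixes a :: "complex^'n" and S :: "(complex^'n) set"
  assumes S: "bounded S" and ak: "a$k \<noteq> 0" and q: "0 \<le> q" "q < 2"
  shows "(\<integral>\<^sup>+ z. indicator S z * ennreal (cmod (c - Lf a z) powr (-q)) \<partial>lborel) < \<infinity>"
proof -
  obtain R where R: "0 \<le> R" "\<And>z. z \<in> S \<Longrightarrow> norm z \<le> R"
    using S by (meson bounded_pos less_imp_le)
  define E where "E = (\<lambda>z::complex^'n. ennreal (cmod (c - Lf a z) powr (-q)))"
  have Ecat: "continuous_on UNIV (\<lambda>z::complex^'n. c - Lf a z)"
    unfolding Lf_def by (intro continuous_intros)
  have Em[measurable]: "E \<in> borel_measurable borel"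
  proof -
    have "(\<lambda>z::complex^'n. c - Lf a z) \<in> borel_measurable borel"
      using Ecat by (rule borel_measurable_continuous_onI)
    then show ?thesis unfolding E_def by measurable
  qed
  define G where "G = (\<lambda>z::complex^'n. (\<Prod>b\<in>Basis. indicator {-R..R} (z \<bullet> b) :: ennreal) * E z)"
  have Gm[measurable]: "G \<in> borel_measurable borel"
    unfolding G_def by measurable
  define emb where "emb = (\<lambda>f. \<Sum>b\<in>(Basis::(complex^'n) set). f b *\<^sub>R b)"
  have embm[measurable]: "emb \<in> PiM Basis (\<lambda>_. lborel) \<rightarrow>\<^sub>M borel"
    unfolding emb_def by measurable
  have "(\<integral>\<^sup>+ z. indicator S z * E z \<partial>lborel) \<le> (\<integral>\<^sup>+ z. G z \<partial>lborel)"
  proof (intro nn_integral_mono)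
    fix z :: "complex^'n"
    show "indicator S z * E z \<le> G z"
    proof (cases "z \<in> S")
      case True
      then have "(\<Prod>b\<in>Basis. indicator {-R..R} (z \<bullet> b) :: ennreal) = 1"
        using R(2)[OF True] Basis_le_norm[of _ z] by (intro prod.neutral) (force simp: indicator_def abs_le_iff)
      then show ?thesis using True by (simp add: G_def)
    qed simp
  qed
  also have "(\<integral>\<^sup>+ z. G z \<partial>lborel) = (\<integral>\<^sup>+ f. G (emb f) \<partial>PiM Basis (\<lambda>_. lborel))"
    unfolding lborel_eq[where 'a="complex^'n"] emb_def[symmetric]
    by (rule nn_integral_distr) auto
  also have "\<dots> = (\<integral>\<^sup>+ f. (\<Prod>b\<in>Basis. indicator {-R..R} (f b)) *
      ennreal (cmod (c - (\<Sum>b\<in>Basis. complex_of_real (f b) * Lf a b)) powr (-q)) \<partial>PiM Basis (\<lambda>_. lborel))"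
  proof (intro nn_integral_cong)
    fix f :: "complex^'n \<Rightarrow> real"
    have "(\<Prod>b\<in>Basis. indicator {-R..R} (emb f \<bullet> b) :: ennreal) = (\<Prod>b\<in>Basis. indicator {-R..R} (f b))"
      unfolding emb_def by (intro prod.cong refl) (simp add: emb_inner)
    moreover have "Lf a (emb f) = (\<Sum>b\<in>Basis. complex_of_real (f b) * Lf a b)"
      unfolding emb_def Lf_sum Lf_scaleR ..
    ultimately show "G (emb f) = (\<Prod>b\<in>Basis. indicator {-R..R} (f b)) *
      ennreal (cmod (c - (\<Sum>b\<in>Basis. complex_of_real (f b) * Lf a b)) powr (-q))"
      unfolding G_def E_def by simp
  qed
  also have "\<dots> < \<infinity>"
  proof (rule core_PiM)
    show "axis k 1 \<in> (Basis::(complex^'n) set)" "axis k \<i> \<in> (Basis::(complex^'n) set)"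
      by (auto simp: Basis_complex_def)
    show "axis k (1::complex) \<noteq> axis k \<i>"
      by (metis axis_nth complex_i_not_one)
    show "Lf a (axis k \<i>) = \<i> * Lf a (axis k 1)" "Lf a (axis k 1) \<noteq> 0"
      using ak by (auto simp: Lf_axis)
  qed (use q R in auto)
  finally show ?thesis unfolding E_def .
qed

lemma vec_decomp:
  fixes h :: "complex^'n"
  shows "h = (\<Sum>j\<in>UNIV. Re (h$j) *\<^sub>R axis j 1 + Im (h$j) *\<^sub>R axis j \<i>)"
  by (simp add: vec_eq_iff sum_component axis_def if_distrib complex_eq_iff cong: if_cong)

lemma wirtinger_Re:
  fixes D :: "(complex^'n) \<Rightarrow>\<^sub>L real"
  shows "blinfun_apply D h = 2 * Re (\<Sum>j\<in>UNIV. wirtinger (blinfun_apply D) j * h$j)"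
proof -
  have "blinfun_apply D h = blinfun_apply D (\<Sum>j\<in>UNIV. Re (h$j) *\<^sub>R axis j 1 + Im (h$j) *\<^sub>R axis j \<i>)"
    using vec_decomp[of h] by simp
  also have "\<dots> = (\<Sum>j\<in>UNIV. Re (h$j) * blinfun_apply D (axis j 1) + Im (h$j) * blinfun_apply D (axis j \<i>))"
    by (simp add: blinfun.sum_right blinfun.add_right blinfun.scaleR_right)
  also have "\<dots> = 2 * Re (\<Sum>j\<in>UNIV. wirtinger (blinfun_apply D) j * h$j)"
    by (simp add: wirtinger_def Re_sum sum_distrib_left algebra_simps add_divide_distrib)
  finally show ?thesis .
qed

lemma supporting:
  fixes \<Omega> U :: "(complex^'n) set" and \<rho> :: "complex^'n \<Rightarrow> real"
    and \<rho>' :: "complex^'n \<Rightarrow> ((complex^'n) \<Rightarrow>\<^sub>L real)" and \<zeta> :: "complex^'n"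
  assumes op: "open \<Omega>" and cv: "convex \<Omega>" and oU: "open U" and fU: "frontier \<Omega> \<subseteq> U"
    and der: "\<forall>z\<in>U. (\<rho> has_derivative blinfun_apply (\<rho>' z)) (at z)"
    and eq: "\<Omega> \<inter> U = {z\<in>U. \<rho> z < 0}" and nz: "\<rho>' \<zeta> \<noteq> 0" and fr: "\<zeta> \<in> frontier \<Omega>"
  shows "\<forall>w\<in>\<Omega>. blinfun_apply (\<rho>' \<zeta>) (w - \<zeta>) < 0"
proof -
  define D where "D = blinfun_apply (\<rho>' \<zeta>)"
  have zU: "\<zeta> \<in> U" using fr fU by auto
  have znO: "\<zeta> \<notin> \<Omega>" using fr op by (simp add: frontier_def interior_open)
  have zcl: "\<zeta> \<in> closure \<Omega>" using fr by (simp add: frontier_def)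
  have r0: "\<not> \<rho> \<zeta> < 0" using zU znO eq by blast
  have dz: "(\<rho> has_derivative D) (at \<zeta>)" using der zU unfolding D_def by blast
  obtain e where e: "e > 0" "ball \<zeta> e \<subseteq> U" using oU zU open_contains_ball by blast
  have weak: "D (w - \<zeta>) \<le> 0" if w: "w \<in> \<Omega>" for w
  proof (rule ccontr)
    assume "\<not> D (w - \<zeta>) \<le> 0"
    then have pos: "D (w - \<zeta>) > 0" by simp
    define v where "v = w - \<zeta>"
    have "((\<lambda>t::real. \<zeta> + t *\<^sub>R v) has_derivative (\<lambda>t. t *\<^sub>R v)) (at 0)"
      by (auto intro!: derivative_eq_intros)
    moreover have "(\<rho> has_derivative D) (at (\<zeta> + 0 *\<^sub>R v))" using dz by simp
    ultimately have "((\<lambda>t. \<rho> (\<zeta> + t *\<^sub>R v)) has_derivative (\<lambda>t. D (t *\<^sub>R v))) (at 0)"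
      by (rule has_derivative_compose)
    then have "((\<lambda>t. \<rho> (\<zeta> + t *\<^sub>R v)) has_field_derivative D v) (at 0)"
      by (rule has_derivative_imp_has_field_derivative) (simp add: D_def blinfun.scaleR_right)
    from DERIV_pos_inc_right[OF this] pos obtain d where d: "d > 0"
      "\<And>h. 0 < h \<Longrightarrow> h < d \<Longrightarrow> \<rho> (\<zeta> + 0 *\<^sub>R v) < \<rho> (\<zeta> + (0 + h) *\<^sub>R v)"
      unfolding v_def by blast
    define h where "h = min (d/2) (min (1/2) (e / (2 * (norm v + 1))))"
    have "0 < e / (2 * (norm v + 1))" using e by (intro divide_pos_pos) (auto intro: add_nonneg_pos)
    then have h: "0 < h" "h < d" "h < 1" using d e by (auto simp: h_def)
    have hv: "norm (h *\<^sub>R v) < e"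
    proof -
      have "h * norm v \<le> (e / (2 * (norm v + 1))) * norm v"
        by (intro mult_right_mono) (auto simp: h_def)
      also have "\<dots> < e"
      proof -
        have p: "0 < 2 * (norm v + 1)" by (auto intro: add_nonneg_pos)
        have "norm v < 2 * (norm v + 1)" by (smt (verit) norm_ge_zero)
        then have "e * norm v < e * (2 * (norm v + 1))" using e by (intro mult_strict_left_mono) auto
        then show ?thesis using p by (simp add: pos_divide_less_eq)
      qed
      finally show ?thesis using h(1) by (simp add: abs_of_pos)
    qed
    have "w \<noteq> \<zeta>" using w znO by auto
    then have "\<zeta> + h *\<^sub>R v \<in> open_segment w \<zeta>"
      using h unfolding in_segment v_def
      by (intro conjI exI[of _ "1 - h"]) (auto simp: algebra_simps)
    also have "\<dots> \<subseteq> interior \<Omega>"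
      using in_interior_closure_convex_segment[OF cv _ zcl] w op by (simp add: interior_open)
    finally have pO: "\<zeta> + h *\<^sub>R v \<in> \<Omega>" using op by (simp add: interior_open)
    have pU: "\<zeta> + h *\<^sub>R v \<in> U" using e(2) hv by (auto simp: dist_norm)
    have "\<rho> (\<zeta> + h *\<^sub>R v) < 0" using pO pU eq by blast
    moreover have "\<rho> \<zeta> < \<rho> (\<zeta> + h *\<^sub>R v)" using d(2)[OF h(1,2)] by simp
    ultimately show False using r0 by simp
  qed
  obtain u where u: "D u \<noteq> 0"
    using nz unfolding D_def by (metis blinfun_eqI zero_blinfun.rep_eq)
  define u' where "u' = (if D u > 0 then u else -u)"
  have u': "D u' > 0" using u by (auto simp: u'_def D_def blinfun.minus_right)
  have u'0: "u' \<noteq> 0" using u' by (auto simp: D_def)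
  show ?thesis
  proof
    fix w assume w: "w \<in> \<Omega>"
    obtain e' where e': "e' > 0" "ball w e' \<subseteq> \<Omega>" using op w open_contains_ball by blast
    define t where "t = e' / (2 * norm u')"
    have t: "t > 0" using e' u'0 by (simp add: t_def)
    have "norm (t *\<^sub>R u') < e'" using e' u'0 by (simp add: t_def)
    then have "w + t *\<^sub>R u' \<in> \<Omega>" using e'(2) by (auto simp: dist_norm)
    from weak[OF this] have "D (w - \<zeta>) + t * D u' \<le> 0"
      by (simp add: D_def blinfun.add_right blinfun.diff_right blinfun.scaleR_right algebra_simps)
    moreover have "t * D u' > 0" using t u' by simp
    ultimately show "blinfun_apply (\<rho>' \<zeta>) (w - \<zeta>) < 0" unfolding D_def by simp
  qed
qed

lemma holo_chain:
  fixes G :: "complex^'n \<Rightarrow> complex"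
  assumes G: "holo_n S G" and g: "\<And>z. z \<in> S \<Longrightarrow> (g has_field_derivative g' z) (at (G z))"
  shows "holo_n S (\<lambda>z. g (G z))"
  unfolding holo_n_def
proof
  fix z assume z: "z \<in> S"
  obtain A :: "complex^'n" where A: "(G has_derivative (\<lambda>h. \<Sum>j\<in>UNIV. A$j * h$j)) (at z)"
    using G z unfolding holo_n_def by blast
  have "((\<lambda>z. g (G z)) has_derivative (\<lambda>h. g' z * (\<Sum>j\<in>UNIV. A$j * h$j))) (at z)"
    using has_derivative_compose[OF A has_field_derivative_imp_has_derivative[OF g[OF z]]] .
  then have "((\<lambda>z. g (G z)) has_derivative (\<lambda>h. \<Sum>j\<in>UNIV. (\<chi> j. g' z * A$j)$j * h$j)) (at z)"
    by (rule has_derivative_eq_rhs) (simp add: sum_distrib_left mult_ac)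
  then show "\<exists>a::complex^'n. ((\<lambda>z. g (G z)) has_derivative (\<lambda>h. \<Sum>j\<in>UNIV. a$j * h$j)) (at z)" ..
qed

lemma holo_ell: "holo_n S (\<lambda>z::complex^'n. \<Sum>j\<in>UNIV. w j * (\<zeta>$j - z$j))"
  unfolding holo_n_def
proof
  fix z :: "complex^'n"
  have "((\<lambda>z::complex^'n. \<Sum>j\<in>UNIV. w j * (\<zeta>$j - z$j)) has_derivative (\<lambda>h. \<Sum>j\<in>UNIV. w j * (0 - h$j))) (at z)"
    by (intro has_derivative_sum has_derivative_mult_right has_derivative_diff has_derivative_const
        bounded_linear.has_derivative[OF bounded_linear_vec_nth] has_derivative_ident)
  then have "((\<lambda>z::complex^'n. \<Sum>j\<in>UNIV. w j * (\<zeta>$j - z$j)) has_derivative (\<lambda>h. \<Sum>j\<in>UNIV. (\<chi> j. - w j)$j * h$j)) (at z)"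
    by (rule has_derivative_eq_rhs) simp
  then show "\<exists>a::complex^'n. ((\<lambda>z::complex^'n. \<Sum>j\<in>UNIV. w j * (\<zeta>$j - z$j)) has_derivative (\<lambda>h. \<Sum>j\<in>UNIV. a$j * h$j)) (at z)" ..
qed

lemma holo_cont:
  assumes "holo_n S G" shows "continuous_on S G"
proof -
  have "\<forall>z\<in>S. isCont G z"
    using assms unfolding holo_n_def by (blast intro: has_derivative_continuous)
  then show ?thesis by (rule continuous_at_imp_continuous_on)
qed

lemma holo_meas:
  assumes "holo_n S G" "open S"
  shows "(\<lambda>z. indicator S z *\<^sub>R (norm (G z) powr p)) \<in> borel_measurable borel"
proof -
  have [measurable]: "(\<lambda>z. indicator S z *\<^sub>R G z) \<in> borel_measurable borel"
    using assms by (intro borel_measurable_continuous_on_indicator holo_cont) auto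
  have "(\<lambda>z. norm (indicator S z *\<^sub>R G z) powr p) \<in> borel_measurable borel" by measurable
  moreover have "(\<lambda>z. norm (indicator S z *\<^sub>R G z) powr p) = (\<lambda>z. indicator S z *\<^sub>R (norm (G z) powr p))"
    by (auto simp: indicator_def)
  ultimately show ?thesis by simp
qed

lemma inv_powr: "0 \<le> (y::real) \<Longrightarrow> inverse y powr p = y powr -p"
  by (simp add: inverse_eq_divide powr_divide powr_minus)

lemma OL_from_bound:
  fixes h :: "complex^'n \<Rightarrow> complex" and a :: "complex^'n"
  assumes hol: "holo_n \<Omega> h" and op: "open \<Omega>" and bd: "bounded \<Omega>" and ak: "a$k \<noteq> 0"
    and q: "0 \<le> q" "q < 2" and C: "0 \<le> C1" "0 \<le> C2"
    and bnd: "\<forall>z\<in>\<Omega>. norm (h z) powr p \<le> C1 + C2 * cmod (c - Lf a z) powr (-q)"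
  shows "h \<in> OL p \<Omega>"
  unfolding OL_def set_integrable_def
proof (intro CollectI conjI hol integrableI_bounded)
  show "(\<lambda>z. indicator \<Omega> z *\<^sub>R (norm (h z) powr p)) \<in> borel_measurable lborel"
    using holo_meas[OF hol op] by simp
  define E where "E = (\<lambda>z::complex^'n. ennreal (cmod (c - Lf a z) powr (-q)))"
  have Ecat: "continuous_on UNIV (\<lambda>z::complex^'n. c - Lf a z)"
    unfolding Lf_def by (intro continuous_intros)
  have Em[measurable]: "E \<in> borel_measurable borel"
  proof -
    have "(\<lambda>z::complex^'n. c - Lf a z) \<in> borel_measurable borel"
      using Ecat by (rule borel_measurable_continuous_onI)
    then show ?thesis unfolding E_def by measurable
  qed
  have Om[measurable]: "\<Omega> \<in> sets borel" using op by auto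
  have "(\<integral>\<^sup>+ z. ennreal (norm (indicator \<Omega> z *\<^sub>R (norm (h z) powr p))) \<partial>lborel)
     \<le> (\<integral>\<^sup>+ z. ennreal C1 * indicator \<Omega> z + ennreal C2 * (indicator \<Omega> z * E z) \<partial>lborel)"
  proof (intro nn_integral_mono)
    fix z :: "complex^'n"
    show "ennreal (norm (indicator \<Omega> z *\<^sub>R (norm (h z) powr p))) \<le> ennreal C1 * indicator \<Omega> z + ennreal C2 * (indicator \<Omega> z * E z)"
    proof (cases "z \<in> \<Omega>")
      case True
      then have "ennreal (norm (h z) powr p) \<le> ennreal (C1 + C2 * cmod (c - Lf a z) powr (-q))"
        using bnd by (intro ennreal_leI) auto
      then show ?thesis using True C by (simp add: E_def ennreal_plus[symmetric] ennreal_mult[symmetric] del: ennreal_plus)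
    qed simp
  qed
  also have "\<dots> = ennreal C1 * emeasure lborel \<Omega> + ennreal C2 * (\<integral>\<^sup>+ z. indicator \<Omega> z * E z \<partial>lborel)"
    by (subst nn_integral_add) (auto simp: nn_integral_cmult)
  also have "\<dots> < \<infinity>"
    using emeasure_bounded_finite[OF bd] core_lborel[OF bd ak q, of c]
    by (simp add: E_def ennreal_mult_less_top)
  finally show "(\<integral>\<^sup>+ z. ennreal (norm (indicator \<Omega> z *\<^sub>R (norm (h z) powr p))) \<partial>lborel) < \<infinity>" .
qed

lemma log_bound:
  assumes p: "1 \<le> p" and M: "1 \<le> M" and x: "0 < x" "x \<le> M"
  shows "(\<bar>ln x\<bar> + pi) powr p \<le> 2 powr p * (ln M + pi) powr p + 2 powr p * p powr p * x powr (-1)"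
proof -
  define L where "L = ln M + pi"
  define P where "P = p * x powr (-1/p)"
  have L0: "0 < L" using M by (simp add: L_def add_nonneg_pos)
  have P0: "0 < P" using p x by (simp add: P_def)
  have lnM: "0 \<le> ln M" using M by simp
  have "\<bar>ln x\<bar> \<le> ln M + P"
  proof (cases "x \<ge> 1")
    case True
    have "ln x \<le> ln M" using x by simp
    then show ?thesis using True P0 by (simp add: abs_of_nonneg)
  next
    case False
    have "ln (x powr (-1/p)) \<le> x powr (-1/p) - 1"
      using x by (intro ln_le_minus_one) simp
    moreover have "ln (x powr (-1/p)) = - ln x / p" using x by (simp add: ln_powr)
    ultimately have "- ln x / p \<le> x powr (-1/p)" by simp
    then have "p * (- ln x / p) \<le> p * x powr (-1/p)" using p by (intro mult_left_mono) auto
    then have "- ln x \<le> P" using p by (simp add: P_def)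
    moreover have "ln x < 0" using False x by simp
    ultimately show ?thesis using lnM by simp
  qed
  then have "\<bar>ln x\<bar> + pi \<le> L + P" by (simp add: L_def)
  then have "(\<bar>ln x\<bar> + pi) powr p \<le> (L + P) powr p"
    using p by (intro powr_mono2) auto
  also have "\<dots> \<le> (2 * max L P) powr p"
    using p L0 P0 by (intro powr_mono2) auto
  also have "\<dots> = 2 powr p * max L P powr p"
    using L0 P0 by (simp add: powr_mult)
  also have "\<dots> \<le> 2 powr p * (L powr p + P powr p)"
    by (intro mult_left_mono) (auto simp: max_def)
  also have "P powr p = p powr p * x powr (-1)"
    using p x by (simp add: P_def powr_mult powr_powr)
  finally show ?thesis by (simp add: L_def algebra_simps)
qed

theorem mainTheorem11:
  fixes \<Omega> U :: "(complex^'n) set" and \<rho> :: "complex^'n \<Rightarrow> real"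
    and \<rho>' :: "complex^'n \<Rightarrow> ((complex^'n) \<Rightarrow>\<^sub>L real)" and \<zeta> :: "complex^'n"
  assumes "bounded \<Omega>" and "open \<Omega>" and "convex \<Omega>"
    and "open U" and "frontier \<Omega> \<subseteq> U"
    and "\<forall>z\<in>U. (\<rho> has_derivative blinfun_apply (\<rho>' z)) (at z)"
    and "continuous_on U \<rho>'"
    and "\<Omega> \<inter> U = {z\<in>U. \<rho> z < 0}"
    and "\<forall>z\<in>frontier \<Omega>. \<rho>' z \<noteq> 0"
    and "\<zeta> \<in> frontier \<Omega>"
  shows "holo_n \<Omega> (f_zeta (\<rho>' \<zeta>) \<zeta>)
    \<and> (\<forall>p. 1 \<le> p \<and> p < 2 \<longrightarrow> f_zeta (\<rho>' \<zeta>) \<zeta> \<in> OL p \<Omega>)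
    \<and> f_zeta (\<rho>' \<zeta>) \<zeta> \<notin> OL_inf \<Omega>
    \<and> (\<forall>p. 1 \<le> p \<longrightarrow> (\<lambda>z. Ln (f_zeta (\<rho>' \<zeta>) \<zeta> z)) \<in> OL p \<Omega>)
    \<and> (\<lambda>z. Ln (f_zeta (\<rho>' \<zeta>) \<zeta> z)) \<notin> OL_inf \<Omega>"
proof -
  note A = assms
  define D where "D = \<rho>' \<zeta>"
  define wv :: "complex^'n" where "wv = (\<chi> j. wirtinger (blinfun_apply D) j)"
  define ell where "ell = (\<lambda>z::complex^'n. \<Sum>j\<in>UNIV. wirtinger (blinfun_apply D) j * (\<zeta>$j - z$j))"
  define F where "F = f_zeta D \<zeta>"
  have F_eq: "F z = inverse (ell z)" for z
    by (simp add: F_def f_zeta_def ell_def inverse_eq_divide)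
  have ell_L: "ell z = Lf wv \<zeta> - Lf wv z" for z
    by (simp add: ell_def Lf_def wv_def sum_subtractf[symmetric] right_diff_distrib)
  have Re_ell: "Re (ell z) = - blinfun_apply D (z - \<zeta>) / 2" for z
  proof -
    have "blinfun_apply D (\<zeta> - z) = 2 * Re (ell z)"
      unfolding ell_def using wirtinger_Re[of D "\<zeta> - z"] by simp
    moreover have "blinfun_apply D (\<zeta> - z) = - blinfun_apply D (z - \<zeta>)"
      by (metis blinfun.minus_right minus_diff_eq)
    ultimately show ?thesis by simp
  qed
  have sup: "\<forall>w\<in>\<Omega>. blinfun_apply D (w - \<zeta>) < 0"
    unfolding D_def using supporting[OF A(2,3,4,5,6,8)] A(9,10) by blast
  have Repos: "0 < Re (ell z)" if "z \<in> \<Omega>" for z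
    using sup that Re_ell by auto
  have lnz: "ell z \<noteq> 0" if "z \<in> \<Omega>" for z
    using Repos[OF that] by auto
  obtain k where ak: "wv$k \<noteq> 0"
  proof (rule ccontr)
    assume "\<not> thesis"
    with that have "\<forall>k. wv$k = 0" by blast
    then have "\<forall>h. blinfun_apply D h = 0"
      using wirtinger_Re[of D] by (simp add: wv_def)
    then have "D = 0" by (intro blinfun_eqI) simp
    then show False using A(9,10) by (simp add: D_def)
  qed
  have holl: "holo_n \<Omega> ell" unfolding ell_def by (rule holo_ell)
  have holF: "holo_n \<Omega> F"
  proof -
    have "holo_n \<Omega> (\<lambda>z. inverse (ell z))"
      by (rule holo_chain[OF holl]) (rule DERIV_inverse, rule lnz)
    moreover have "F = (\<lambda>z. inverse (ell z))" by (simp add: fun_eq_iff F_eq)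
    ultimately show ?thesis by simp
  qed
  have ReF: "0 < Re (F z)" if "z \<in> \<Omega>" for z
    using Repos[OF that] lnz[OF that] unfolding F_eq
    by (simp add: divide_pos_pos sum_power2_gt_zero_iff complex_eq_iff)
  have holLn: "holo_n \<Omega> (\<lambda>z. Ln (F z))"
  proof (rule holo_chain[OF holF has_field_derivative_Ln])
    fix z assume "z \<in> \<Omega>"
    then show "F z \<notin> \<real>\<^sub>\<le>\<^sub>0" using ReF[of z] by (auto simp: complex_nonpos_Reals_iff)
  qed
  have contl: "continuous_on UNIV ell" unfolding ell_def by (intro continuous_intros)
  obtain M0 where M0: "\<And>z. z \<in> closure \<Omega> \<Longrightarrow> norm (ell z) \<le> M0"
  proof -
    have "compact (ell ` closure \<Omega>)"
      using A(1) contl by (intro compact_continuous_image) (auto intro: continuous_on_subset)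
    then show ?thesis using that compact_imp_bounded bounded_iff by (metis imageI)
  qed
  define M where "M = max 1 M0"
  have M: "1 \<le> M" "\<And>z. z \<in> \<Omega> \<Longrightarrow> cmod (ell z) \<le> M"
    using M0 closure_subset by (force simp: M_def)+
  have small: "\<exists>z\<in>\<Omega>. cmod (ell z) < e" if e: "e > 0" for e
  proof -
    have "isCont ell \<zeta>" using contl by (simp add: continuous_on_eq_continuous_at)
    then obtain d where d: "d > 0" "\<And>x. dist x \<zeta> < d \<Longrightarrow> dist (ell x) (ell \<zeta>) < e"
      using e unfolding continuous_at_eps_delta by blast
    have "\<zeta> \<in> closure \<Omega>" using A(10) by (simp add: frontier_def)
    then obtain z where "z \<in> \<Omega>" "dist z \<zeta> < d" using d(1) closure_approachable by blast
    moreover have "ell \<zeta> = 0" by (simp add: ell_def)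
    ultimately show ?thesis using d(2) by (auto simp: dist_norm)
  qed
  have part2: "F \<in> OL p \<Omega>" if p: "1 \<le> p" "p < 2" for p
  proof (rule OL_from_bound[OF holF A(2,1) ak, of p 0 1 p "Lf wv \<zeta>"])
    show "\<forall>z\<in>\<Omega>. norm (F z) powr p \<le> 0 + 1 * cmod (Lf wv \<zeta> - Lf wv z) powr (-p)"
      using p by (auto simp: F_eq ell_L[symmetric] norm_inverse inv_powr)
  qed (use p in auto)
  have part4: "(\<lambda>z. Ln (F z)) \<in> OL p \<Omega>" if p: "1 \<le> p" for p
  proof (rule OL_from_bound[OF holLn A(2,1) ak, of 1 "2 powr p * (ln M + pi) powr p" "2 powr p * p powr p" p "Lf wv \<zeta>"])
    show "\<forall>z\<in>\<Omega>. norm (Ln (F z)) powr p \<le> 2 powr p * (ln M + pi) powr p + 2 powr p * p powr p * cmod (Lf wv \<zeta> - Lf wv z) powr (-1)"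
    proof
      fix z assume z: "z \<in> \<Omega>"
      have Fz: "F z \<noteq> 0" using ReF[OF z] by auto
      have "norm (Ln (F z)) \<le> \<bar>Re (Ln (F z))\<bar> + \<bar>Im (Ln (F z))\<bar>" by (rule cmod_le)
      also have "\<bar>Im (Ln (F z))\<bar> \<le> pi"
        using Re_Ln_pos_lt_imp[OF ReF[OF z]] pi_gt_zero by linarith
      also have "\<bar>Re (Ln (F z))\<bar> = \<bar>ln (cmod (ell z))\<bar>"
        using Fz lnz[OF z] by (simp add: F_eq norm_inverse ln_inverse)
      finally have "norm (Ln (F z)) \<le> \<bar>ln (cmod (ell z))\<bar> + pi" by simp
      then have "norm (Ln (F z)) powr p \<le> (\<bar>ln (cmod (ell z))\<bar> + pi) powr p"
        using p by (intro powr_mono2) auto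
      also have "\<dots> \<le> 2 powr p * (ln M + pi) powr p + 2 powr p * p powr p * cmod (ell z) powr (-1)"
        using log_bound[OF p M(1), of "cmod (ell z)"] lnz[OF z] M(2)[OF z] by simp
      finally show "norm (Ln (F z)) powr p \<le> 2 powr p * (ln M + pi) powr p + 2 powr p * p powr p * cmod (Lf wv \<zeta> - Lf wv z) powr (-1)"
        by (simp add: ell_L)
    qed
  qed (use p M in auto)
  have part3: "F \<notin> OL_inf \<Omega>"
  proof
    assume "F \<in> OL_inf \<Omega>"
    then obtain B where B: "\<And>z. z \<in> \<Omega> \<Longrightarrow> norm (F z) \<le> B"
      unfolding OL_inf_def bounded_iff by auto
    obtain z where z: "z \<in> \<Omega>" "cmod (ell z) < 1 / (\<bar>B\<bar> + 1)"
      using small[of "1 / (\<bar>B\<bar> + 1)"] by (metis abs_ge_zero add_nonneg_pos zero_less_one zero_less_divide_1_iff)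
    have pos: "0 < cmod (ell z)" using lnz[OF z(1)] by simp
    then have "\<bar>B\<bar> + 1 < 1 / cmod (ell z)" using z(2)
      by (simp add: field_simps)
    also have "1 / cmod (ell z) = norm (F z)" by (simp add: F_eq norm_inverse inverse_eq_divide norm_divide)
    finally show False using B[OF z(1)] by simp
  qed
  have part5: "(\<lambda>z. Ln (F z)) \<notin> OL_inf \<Omega>"
  proof
    assume "(\<lambda>z. Ln (F z)) \<in> OL_inf \<Omega>"
    then obtain B where B: "\<And>z. z \<in> \<Omega> \<Longrightarrow> norm (Ln (F z)) \<le> B"
      unfolding OL_inf_def bounded_iff by auto
    obtain z where z: "z \<in> \<Omega>" "cmod (ell z) < exp (- (\<bar>B\<bar> + 1))"
      using small[of "exp (- (\<bar>B\<bar> + 1))"] by auto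
    have pos: "0 < cmod (ell z)" using lnz[OF z(1)] by simp
    have "ln (cmod (ell z)) < - (\<bar>B\<bar> + 1)"
      using z(2) pos by (metis ln_exp ln_less_cancel_iff exp_gt_zero)
    moreover have "\<bar>Re (Ln (F z))\<bar> = \<bar>ln (cmod (ell z))\<bar>"
      using pos by (simp add: F_eq norm_inverse ln_inverse)
    moreover have "\<bar>Re (Ln (F z))\<bar> \<le> norm (Ln (F z))" by (rule abs_Re_le_cmod)
    ultimately show False using B[OF z(1)] by simp
  qed
  show ?thesis
    using holF part2 part3 part4 part5 unfolding F_def D_def by blast
qed

end
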